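(* Let $\mathcal G$ be a Lie superalgebra over a field of characteristic zero and let $\mathcal S\subseteq\mathcal U_{1-}$ be the space of symmetric operators on $\mathcal U_1=\mathcal G$ described below. If $A,B\in\mathcal S$, then $[A,B]\in\mathcal S$, where $[\cdot,\cdot]$ is the extended bracket described below.
   Context: Set $\mathcal U_1=\mathcal G$ with its $\mathbb Z_2$-grading. For $p\ge1$ define recursively $\mathcal U_{-p+1}=\mathrm{Hom}(\mathcal U_1,\mathcal U_{-p+2})$, $\mathbb Z_2$-graded by declaring $A$ even (resp. odd) if it preserves (resp. reverses) parity; $|u|$ is the parity of a homogeneous element, and sign formulas are for homogeneous elements extended bilinearly. Elements of $\mathcal U_{1-p}$ are operators of order $p$ (elements of $\mathcal G$ have order $0$), and an operator $A$ of order $p\ge1$ is identified with the $p$-linear map $A(x_1,\dots,x_p)=A(x_1)(x_2)\cdots(x_p)$; $\mathcal U_{1-}=\bigoplus_{p\ge0}\mathcal U_{1-p}$. An operator of order $p\ge2$ is symmetric if it is graded symmetric: $A(\dots,x_i,x_{i+1},\dots)=(-1)^{|x_i||x_{i+1}|}A(\dots,x_{i+1},x_i,\dots)$ for all homogeneous arguments and all $i$; all operators of order $0$ or $1$ are symmetric; $\mathcal S=\bigoplus_{p\ge0}\mathcal S_{1-p}$ where $\mathcal S_{1-p}$ is the space of symmetric operators of order $p$. Define $\circ$: $A\circ y=A(y)$, $y\circ A=0$ for $A$ of order $\ge1$ and $y\in\mathcal U_1$; for $A,B$ of orders $\ge1$, recursively $(A\circ B)(x)=A\circ B(x)+(-1)^{|B||x|}A(x)\circ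 B$. Define $\bullet$: $A_p\bullet B_q=\frac{p!q!}{(p+q-1)!}A_p\circ B_q$ for orders $p,q\ge1$; $A_p\bullet x=pA_p(x)$, $x\bullet A_p=0$, $x\bullet y=0$ for $x,y\in\mathcal U_1$. The bracket of $\mathcal G$ is extended to $\mathcal U_{1-}$: on $\mathcal G$ it is the given bracket, and for operators $A,B$ of orders $p,q$ with $p+q\ge1$, $[A,B]$ is the operator of order $p+q$ defined recursively by $[A,B]\bullet x=[A,B\bullet x]+(-1)^{|x||B|}[A\bullet x,B]$ for all $x\in\mathcal G$. *)

theory Defs
  imports Main "HOL.Vector_Spaces"
begin

text \<open>Parities are booleans: False = even, True = odd.
  The Z2-grading of G is given by two subspaces G0 (even) and G1 (odd).\<close>

definition Gp :: "'g set \<Rightarrow> 'g set \<Rightarrow> bool \<Rightarrow> 'g set" where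
  "Gp G0 G1 e = (if e then G1 else G0)"

text \<open>sign (-1)^(|x||y|) acting on a vector\<close>
definition sg :: "bool \<Rightarrow> bool \<Rightarrow> 'g::ab_group_add \<Rightarrow> 'g" where
  "sg a b v = (if a \<and> b then - v else v)"

definition lie_superalgebra ::
  "('k::field_char_0 \<Rightarrow> 'g::ab_group_add \<Rightarrow> 'g) \<Rightarrow> 'g set \<Rightarrow> 'g set \<Rightarrow> ('g \<Rightarrow> 'g \<Rightarrow> 'g) \<Rightarrow> bool" where
  "lie_superalgebra scale G0 G1 br \<longleftrightarrow>
     vector_space scale \<and>
     module.subspace scale G0 \<and> module.subspace scale G1 \<and>
     (\<forall>x. \<exists>a\<in>G0. \<exists>b\<in>G1. x = a + b) \<and> G0 \<inter> G1 = {0} \<and>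
     (\<forall>x y z. br (x + y) z = br x z + br y z) \<and>
     (\<forall>x y z. br x (y + z) = br x y + br x z) \<and>
     (\<forall>c x y. br (scale c x) y = scale c (br x y)) \<and>
     (\<forall>c x y. br x (scale c y) = scale c (br x y)) \<and>
     (\<forall>a b x y. x \<in> Gp G0 G1 a \<longrightarrow> y \<in> Gp G0 G1 b \<longrightarrow> br x y \<in> Gp G0 G1 (a \<noteq> b)) \<and>
     (\<forall>a b x y. x \<in> Gp G0 G1 a \<longrightarrow> y \<in> Gp G0 G1 b \<longrightarrow> br x y = - sg a b (br y x)) \<and>
     (\<forall>a b c x y z. x \<in> Gp G0 G1 a \<longrightarrow> y \<in> Gp G0 G1 b \<longrightarrow> z \<in> Gp G0 G1 c \<longrightarrow>
        br x (br y z) = br (br x y) z + sg a b (br y (br x z)))"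

definition proj :: "'g set \<Rightarrow> 'g set \<Rightarrow> bool \<Rightarrow> 'g::ab_group_add \<Rightarrow> 'g" where
  "proj G0 G1 e x = (THE y. y \<in> Gp G0 G1 e \<and> x - y \<in> Gp G0 G1 (\<not> e))"

definition homog :: "'g set \<Rightarrow> 'g set \<Rightarrow> 'g \<Rightarrow> bool" where
  "homog G0 G1 x \<longleftrightarrow> x \<in> G0 \<union> G1"

text \<open>An operator of order p is represented by the p-linear map
  A(x1,...,xp) = A(x1)(x2)...(xp), i.e. a function on argument lists of length p
  (values on lists of other lengths are irrelevant).  An operator of order 0
  is the element A [] of G.  A(x) is (\<lambda>ys. A (x # ys)).\<close>

definition multilin :: "('k::field \<Rightarrow> 'g::ab_group_add \<Rightarrow> 'g) \<Rightarrow> nat \<Rightarrow> ('g list \<Rightarrow> 'g) \<Rightarrow> bool" where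
  "multilin scale p A \<longleftrightarrow>
     (\<forall>pre post x y. length pre + length post + 1 = p \<longrightarrow>
        A (pre @ (x + y) # post) = A (pre @ x # post) + A (pre @ y # post)) \<and>
     (\<forall>pre post c x. length pre + length post + 1 = p \<longrightarrow>
        A (pre @ scale c x # post) = scale c (A (pre @ x # post)))"

definition symmetric_op :: "'g set \<Rightarrow> 'g set \<Rightarrow> nat \<Rightarrow> ('g::ab_group_add list \<Rightarrow> 'g) \<Rightarrow> bool" where
  "symmetric_op G0 G1 p A \<longleftrightarrow>
     (p \<ge> 2 \<longrightarrow>
       (\<forall>pre post a b x y. length pre + length post + 2 = p \<longrightarrow>
          (\<forall>z \<in> set pre \<union> set post. homog G0 G1 z) \<longrightarrow>
          x \<in> Gp G0 G1 a \<longrightarrow> y \<in> Gp G0 G1 b \<longrightarrow>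
          A (pre @ x # y # post) = sg a b (A (pre @ y # x # post))))"

text \<open>Parity-c component of an operator (on homogeneous arguments of total parity s
  an operator of parity c takes values of parity s + c); every multilinear operator is
  the sum of its even and odd components.\<close>
definition opar :: "'g set \<Rightarrow> 'g set \<Rightarrow> bool \<Rightarrow> ('g::ab_group_add list \<Rightarrow> 'g) \<Rightarrow> 'g list \<Rightarrow> 'g" where
  "opar G0 G1 c A xs =
     (\<Sum>es \<in> {es. length es = length xs}.
        proj G0 G1 (c \<noteq> odd (length (filter id es))) (A (map2 (proj G0 G1) es xs)))"

text \<open>The extended bracket of an operator A of order p and B of order q, defined by the
  recursion  [A,B]\<bullet>x = [A,B\<bullet>x] + (-1)^(|x||B|) [A\<bullet>x,B]  where [A,B]\<bullet>x = (p+q)[A,B](x),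
  B\<bullet>x = q B(x) (= 0 if q = 0), A\<bullet>x = p A(x) (= 0 if p = 0); the sign is handled by
  decomposing x and B into homogeneous components (bilinear extension).\<close>
fun brk :: "('k::field_char_0 \<Rightarrow> 'g::ab_group_add \<Rightarrow> 'g) \<Rightarrow> 'g set \<Rightarrow> 'g set \<Rightarrow> ('g \<Rightarrow> 'g \<Rightarrow> 'g) \<Rightarrow>
             nat \<Rightarrow> ('g list \<Rightarrow> 'g) \<Rightarrow> nat \<Rightarrow> ('g list \<Rightarrow> 'g) \<Rightarrow> 'g list \<Rightarrow> 'g" where
  "brk scale G0 G1 br p A q B xs =
     (if p + q = 0 then br (A []) (B [])
      else (case xs of [] \<Rightarrow> 0
            | x # ys \<Rightarrow> scale (inverse (of_nat (p + q)))
                ((if q = 0 then 0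
                  else brk scale G0 G1 br p A (q - 1) (\<lambda>zs. scale (of_nat q) (B (x # zs))) ys)
                 + (if p = 0 then 0
                    else (\<Sum>e\<in>UNIV. \<Sum>c\<in>UNIV.
                      sg e c (brk scale G0 G1 br (p - 1)
                                (\<lambda>zs. scale (of_nat p) (A (proj G0 G1 e x # zs)))
                                q (opar G0 G1 c B) ys))))))"

text \<open>Elements of U_{1-} = \<Oplus>_p U_{1-p}: A p is the component of order p; finitely many
  components are nonzero.\<close>
definition in_U :: "('k::field \<Rightarrow> 'g::ab_group_add \<Rightarrow> 'g) \<Rightarrow> (nat \<Rightarrow> 'g list \<Rightarrow> 'g) \<Rightarrow> bool" where
  "in_U scale A \<longleftrightarrow> (\<forall>p. multilin scale p (A p)) \<and>
     finite {p. \<exists>xs. length xs = p \<and> A p xs \<noteq> 0}"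

definition in_S :: "('k::field \<Rightarrow> 'g::ab_group_add \<Rightarrow> 'g) \<Rightarrow> 'g set \<Rightarrow> 'g set \<Rightarrow> (nat \<Rightarrow> 'g list \<Rightarrow> 'g) \<Rightarrow> bool" where
  "in_S scale G0 G1 A \<longleftrightarrow> in_U scale A \<and> (\<forall>p. symmetric_op G0 G1 p (A p))"

definition ext_br :: "('k::field_char_0 \<Rightarrow> 'g::ab_group_add \<Rightarrow> 'g) \<Rightarrow> 'g set \<Rightarrow> 'g set \<Rightarrow> ('g \<Rightarrow> 'g \<Rightarrow> 'g) \<Rightarrow>
      (nat \<Rightarrow> 'g list \<Rightarrow> 'g) \<Rightarrow> (nat \<Rightarrow> 'g list \<Rightarrow> 'g) \<Rightarrow> nat \<Rightarrow> 'g list \<Rightarrow> 'g" where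
  "ext_br scale G0 G1 br A B n xs = (\<Sum>p\<le>n. brk scale G0 G1 br p (A p) (n - p) (B (n - p)) xs)"

end

theory Submission imports Defs begin

declare brk.simps[simp del]

lemma sg_scale_eq: "sg a b v = (if a \<and> b then - v else v)" by (simp add: sg_def)

locale LSA =
  fixes scale :: "'k::field_char_0 \<Rightarrow> 'g::ab_group_add \<Rightarrow> 'g"
    and G0 G1 :: "'g set" and br :: "'g \<Rightarrow> 'g \<Rightarrow> 'g"
  assumes LS: "lie_superalgebra scale G0 G1 br"
begin

sublocale vector_space scale using LS by (simp add: lie_superalgebra_def)

lemma sub0: "subspace G0" and sub1: "subspace G1"
  and decomp: "\<And>x. \<exists>a\<in>G0. \<exists>b\<in>G1. x = a + b" and inter: "G0 \<inter> G1 = {0}"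
  and br_addl: "\<And>x y z. br (x + y) z = br x z + br y z"
  and br_addr: "\<And>x y z. br x (y + z) = br x y + br x z"
  and br_scl: "\<And>c x y. br (scale c x) y = scale c (br x y)"
  and br_scr: "\<And>c x y. br x (scale c y) = scale c (br x y)"
  using LS by (auto simp: lie_superalgebra_def)

lemma subGp: "subspace (Gp G0 G1 e)" using sub0 sub1 by (simp add: Gp_def)

lemma Gp_inter: "u \<in> Gp G0 G1 e \<Longrightarrow> u \<in> Gp G0 G1 (\<not> e) \<Longrightarrow> u = 0"
  using inter by (cases e) (auto simp: Gp_def)

lemma proj_ex: "\<exists>y. y \<in> Gp G0 G1 e \<and> x - y \<in> Gp G0 G1 (\<not> e)"
proof -
  obtain a b where "a \<in> G0" "b \<in> G1" "x = a + b" using decomp by blast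
  show ?thesis
  proof (cases e)
    case True then show ?thesis using \<open>a \<in> G0\<close> \<open>b \<in> G1\<close> \<open>x = a + b\<close> by (intro exI[of _ b]) (simp add: Gp_def)
  next
    case False then show ?thesis using \<open>a \<in> G0\<close> \<open>b \<in> G1\<close> \<open>x = a + b\<close> by (intro exI[of _ a]) (simp add: Gp_def)
  qed
qed

lemma proj_uniq: "y \<in> Gp G0 G1 e \<Longrightarrow> x - y \<in> Gp G0 G1 (\<not> e) \<Longrightarrow>
   y' \<in> Gp G0 G1 e \<Longrightarrow> x - y' \<in> Gp G0 G1 (\<not> e) \<Longrightarrow> y = y'"
proof -
  assume a: "y \<in> Gp G0 G1 e" "x - y \<in> Gp G0 G1 (\<not> e)" "y' \<in> Gp G0 G1 e" "x - y' \<in> Gp G0 G1 (\<not> e)"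
  have "y - y' \<in> Gp G0 G1 e" using a subGp subspace_diff by blast
  moreover have "(x - y') - (x - y) \<in> Gp G0 G1 (\<not> e)" using a subGp subspace_diff by blast
  moreover have "(x - y') - (x - y) = y - y'" by simp
  ultimately have "y - y' = 0" using Gp_inter by metis
  then show ?thesis by simp
qed

lemma proj_prop: "proj G0 G1 e x \<in> Gp G0 G1 e \<and> x - proj G0 G1 e x \<in> Gp G0 G1 (\<not> e)"
  unfolding proj_def
proof (rule theI')
  show "\<exists>!y. y \<in> Gp G0 G1 e \<and> x - y \<in> Gp G0 G1 (\<not> e)"
    using proj_ex proj_uniq by blast
qed

lemma proj_eqI: "y \<in> Gp G0 G1 e \<Longrightarrow> x - y \<in> Gp G0 G1 (\<not> e) \<Longrightarrow> proj G0 G1 e x = y"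
  using proj_prop proj_uniq by blast

lemma proj_in: "proj G0 G1 e x \<in> Gp G0 G1 e" using proj_prop by blast

lemma proj_H: "proj G0 G1 e x \<in> G0 \<union> G1" using proj_in[of e x] by (cases e) (auto simp: Gp_def)

lemma proj_add: "proj G0 G1 e (x + y) = proj G0 G1 e x + proj G0 G1 e y"
proof (rule proj_eqI)
  show "proj G0 G1 e x + proj G0 G1 e y \<in> Gp G0 G1 e" using proj_in subGp subspace_add by blast
  have "x + y - (proj G0 G1 e x + proj G0 G1 e y) = (x - proj G0 G1 e x) + (y - proj G0 G1 e y)" by simp
  then show "x + y - (proj G0 G1 e x + proj G0 G1 e y) \<in> Gp G0 G1 (\<not> e)"
    using proj_prop subGp subspace_add by metis
qed

lemma proj_scale: "proj G0 G1 e (scale c x) = scale c (proj G0 G1 e x)"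
proof (rule proj_eqI)
  show "scale c (proj G0 G1 e x) \<in> Gp G0 G1 e" using proj_in subGp subspace_scale by blast
  have "scale c x - scale c (proj G0 G1 e x) = scale c (x - proj G0 G1 e x)" by (simp add: scale_right_diff_distrib)
  then show "scale c x - scale c (proj G0 G1 e x) \<in> Gp G0 G1 (\<not> e)"
    using proj_prop subGp subspace_scale by metis
qed

lemma proj_zero[simp]: "proj G0 G1 e 0 = 0"
  using proj_scale[of e 0 0] by simp

lemma proj_neg: "proj G0 G1 e (- x) = - proj G0 G1 e x"
  using proj_scale[of e "-1" x] by simp

lemma proj_same: "x \<in> Gp G0 G1 e \<Longrightarrow> proj G0 G1 e x = x"
  by (rule proj_eqI) (auto intro: subspace_0[OF subGp])

lemma proj_other: "x \<in> Gp G0 G1 (\<not> e) \<Longrightarrow> proj G0 G1 e x = 0"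
  by (rule proj_eqI) (auto intro: subspace_0[OF subGp])

lemma proj_proj: "proj G0 G1 d (proj G0 G1 c v) = (if d = c then proj G0 G1 c v else 0)"
  using proj_same[OF proj_in] proj_other[of "proj G0 G1 c v" d] proj_in[of c v]
  by (cases "d = c") auto

lemma proj_sg: "proj G0 G1 e (sg a b v) = sg a b (proj G0 G1 e v)"
  by (simp add: sg_def proj_neg)

lemma sg_add: "sg a b (u + v) = sg a b u + sg a b v" by (simp add: sg_def)
lemma sg_scale: "sg a b (scale c v) = scale c (sg a b v)" by (simp add: sg_def)
lemma sg_zero[simp]: "sg a b 0 = 0" by (simp add: sg_def)
lemma sg_as_scale: "sg a b v = scale (if a \<and> b then -1 else 1) v" by (simp add: sg_def)
lemma sg_sum: "sg a b (sum f S) = (\<Sum>x\<in>S. sg a b (f x))" by (cases "a \<and> b") (auto simp: sg_def sum_negf)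
lemma sg_comm: "sg a b (sg c d v) = sg c d (sg a b v)" by (auto simp: sg_def)
lemma sg_sym: "sg a b v = sg b a v" by (simp add: sg_def conj_commute)
lemma sg_inv: "sg a b (sg a b v) = v" by (simp add: sg_def)

abbreviation "H \<equiv> G0 \<union> G1"
definition par :: "'g \<Rightarrow> bool" where "par x = (x \<notin> G0)"

lemma par_Gp: "x \<in> H \<Longrightarrow> x \<in> Gp G0 G1 (par x)" by (auto simp: par_def Gp_def)
lemma proj_par: "x \<in> H \<Longrightarrow> proj G0 G1 (par x) x = x" by (rule proj_same[OF par_Gp])
lemma proj_npar: "x \<in> H \<Longrightarrow> proj G0 G1 (\<not> par x) x = 0" by (rule proj_other) (simp add: par_Gp)

lemma br_zl: "br 0 y = 0" using br_addl[of 0 0 y] by simp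
lemma br_zr: "br x 0 = 0" using br_addr[of x 0 0] by simp

lemma brk_0: "p + q = 0 \<Longrightarrow> brk scale G0 G1 br p A q B xs = br (A []) (B [])"
  by (subst brk.simps) simp
lemma brk_Nil: "p + q \<noteq> 0 \<Longrightarrow> brk scale G0 G1 br p A q B [] = 0"
  by (subst brk.simps) auto
lemma brk_Cons: "p + q \<noteq> 0 \<Longrightarrow> brk scale G0 G1 br p A q B (x # ys) =
  scale (inverse (of_nat (p + q)))
             ((if q = 0 then 0
               else brk scale G0 G1 br p A (q - 1)
                     (\<lambda>zs. scale (of_nat q) (B (x # zs))) ys) +
              (if p = 0 then 0
               else \<Sum>e\<in>UNIV. \<Sum>c\<in>UNIV.
                        sg e c
                         (brk scale G0 G1 br (p - 1)
                           (\<lambda>zs. scale (of_nat p) (A (proj G0 G1 e x # zs)))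
                           q (opar G0 G1 c B) ys)))"
  by (subst brk.simps) auto


abbreviation "BK \<equiv> brk scale G0 G1 br"
abbreviation "OP \<equiv> opar G0 G1"
abbreviation "PJ \<equiv> proj G0 G1"

lemma opar_add: "OP c (\<lambda>zs. B1 zs + B2 zs) = (\<lambda>xs. OP c B1 xs + OP c B2 xs)"
  by (rule ext) (simp add: opar_def proj_add sum.distrib)
lemma opar_scale: "OP c (\<lambda>zs. scale k (B zs)) = (\<lambda>xs. scale k (OP c B xs))"
  by (rule ext) (simp add: opar_def proj_scale scale_sum_right)

lemma brk_addA: "BK p (\<lambda>zs. A1 zs + A2 zs) q B ys = BK p A1 q B ys + BK p A2 q B ys"
proof (induction ys arbitrary: p q A1 A2 B)
  case Nil
  then show ?case by (cases "p + q = 0") (simp_all add: brk_0 brk_Nil br_addl)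
next
  case (Cons x ys)
  show ?case
  proof (cases "p + q = 0")
    case True then show ?thesis by (simp add: brk_0 br_addl)
  next
    case False
    then show ?thesis
      by (cases "q = 0"; cases "p = 0") (simp_all add: brk_Cons Cons.IH scale_right_distrib sg_add sum.distrib algebra_simps)
  qed
qed

lemma brk_scaleA: "BK p (\<lambda>zs. scale k (A zs)) q B ys = scale k (BK p A q B ys)"
proof (induction ys arbitrary: p q A B k)
  case Nil
  then show ?case by (cases "p + q = 0") (simp_all add: brk_0 brk_Nil br_scl)
next
  case (Cons x ys)
  show ?case
  proof (cases "p + q = 0")
    case True then show ?thesis by (simp add: brk_0 br_scl)
  next
    case False
    then show ?thesis
      by (cases "q = 0"; cases "p = 0") (simp_all add: brk_Cons Cons.IH scale_right_distrib sg_scale scale_sum_right algebra_simps)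
  qed
qed

lemma brk_addB: "BK p A q (\<lambda>zs. B1 zs + B2 zs) ys = BK p A q B1 ys + BK p A q B2 ys"
proof (induction ys arbitrary: p q A B1 B2)
  case Nil
  then show ?case by (cases "p + q = 0") (simp_all add: brk_0 brk_Nil br_addr)
next
  case (Cons x ys)
  show ?case
  proof (cases "p + q = 0")
    case True then show ?thesis by (simp add: brk_0 br_addr)
  next
    case False
    then show ?thesis
      by (cases "q = 0"; cases "p = 0") (simp_all add: brk_Cons Cons.IH opar_add scale_right_distrib sg_add sum.distrib algebra_simps)
  qed
qed

lemma brk_scaleB: "BK p A q (\<lambda>zs. scale k (B zs)) ys = scale k (BK p A q B ys)"
proof (induction ys arbitrary: p q A B k)
  case Nil
  then show ?case by (cases "p + q = 0") (simp_all add: brk_0 brk_Nil br_scr)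
next
  case (Cons x ys)
  show ?case
  proof (cases "p + q = 0")
    case True then show ?thesis by (simp add: brk_0 br_scr)
  next
    case False
    then show ?thesis
      by (cases "q = 0"; cases "p = 0") (simp_all add: brk_Cons Cons.IH opar_scale scale_right_distrib sg_scale scale_sum_right algebra_simps)
  qed
qed

lemma brk_zeroA: "BK p (\<lambda>_. 0) q B ys = 0"
  using brk_scaleA[of p 0 "\<lambda>_. 0" q B ys] by simp
lemma brk_zeroB: "BK p A q (\<lambda>_. 0) ys = 0"
  using brk_scaleB[of p A q 0 "\<lambda>_. 0" ys] by simp
lemma brk_sgA: "BK p (\<lambda>zs. sg a b (A zs)) q B ys = sg a b (BK p A q B ys)"
  by (simp add: sg_as_scale brk_scaleA)
lemma brk_sgB: "BK p A q (\<lambda>zs. sg a b (B zs)) ys = sg a b (BK p A q B ys)"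
  by (simp add: sg_as_scale brk_scaleB)

lemma set_map2_proj: "set (map2 PJ es xs) \<subseteq> H"
  apply clarsimp using proj_H by blast

lemma opar_cong: "H \<subseteq> S \<Longrightarrow> length xs = q \<Longrightarrow>
   (\<And>zs. length zs = q \<Longrightarrow> set zs \<subseteq> S \<Longrightarrow> B zs = B' zs) \<Longrightarrow> OP c B xs = OP c B' xs"
  unfolding opar_def
proof (rule sum.cong)
  fix es :: "bool list" assume "es \<in> {es. length es = length xs}"
  moreover assume "H \<subseteq> S" "length xs = q" "\<And>zs. length zs = q \<Longrightarrow> set zs \<subseteq> S \<Longrightarrow> B zs = B' zs"
  moreover have "set (map2 PJ es xs) \<subseteq> S" using set_map2_proj[of es xs] \<open>H \<subseteq> S\<close> by blast
  ultimately have "B (map2 PJ es xs) = B' (map2 PJ es xs)" by simp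
  then show "PJ (c \<noteq> odd (length (filter id es))) (B (map2 PJ es xs)) =
         PJ (c \<noteq> odd (length (filter id es))) (B' (map2 PJ es xs))" by simp
qed simp

lemma brk_cong: "H \<subseteq> S \<Longrightarrow> length ys = p + q \<Longrightarrow> set ys \<subseteq> S \<Longrightarrow>
  (\<And>zs. length zs = p \<Longrightarrow> set zs \<subseteq> S \<Longrightarrow> A zs = A' zs) \<Longrightarrow>
  (\<And>zs. length zs = q \<Longrightarrow> set zs \<subseteq> S \<Longrightarrow> B zs = B' zs) \<Longrightarrow>
  BK p A q B ys = BK p A' q B' ys"
proof (induction ys arbitrary: p q A A' B B')
  case Nil
  then show ?case by (simp add: brk_0)
next
  case (Cons x ys)
  have ne: "p + q \<noteq> 0" using Cons.prems(2) by auto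
  have xS: "x \<in> S" using Cons.prems by simp
  have 1: "BK p A (q - 1) (\<lambda>zs. scale (of_nat q) (B (x # zs))) ys
         = BK p A' (q - 1) (\<lambda>zs. scale (of_nat q) (B' (x # zs))) ys" if "q \<noteq> 0"
    by (rule Cons.IH) (use Cons.prems that xS in auto)
  have 2: "BK (p - 1) (\<lambda>zs. scale (of_nat p) (A (PJ e x # zs))) q (OP c B) ys
         = BK (p - 1) (\<lambda>zs. scale (of_nat p) (A' (PJ e x # zs))) q (OP c B') ys" if "p \<noteq> 0" for e c
  proof (rule Cons.IH)
    show "OP c B zs = OP c B' zs" if "length zs = q" for zs
      by (rule opar_cong[where S=S]) (use Cons.prems that in auto)
    show "scale (of_nat p) (A (PJ e x # zs)) = scale (of_nat p) (A' (PJ e x # zs))"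
      if "length zs = p - 1" "set zs \<subseteq> S" for zs
      using Cons.prems that \<open>p \<noteq> 0\<close> proj_H[of e x] by auto
  qed (use Cons.prems \<open>p \<noteq> 0\<close> in auto)
  show ?case using ne 1 2 by (cases "q = 0"; cases "p = 0") (simp_all add: brk_Cons)
qed


definition Zr :: "nat \<Rightarrow> ('g list \<Rightarrow> 'g) \<Rightarrow> bool" where
  "Zr k F \<longleftrightarrow> (\<forall>pre post. set pre \<subseteq> H \<longrightarrow> set post \<subseteq> H \<longrightarrow>
      length pre + length post + 1 = k \<longrightarrow> F (pre @ 0 # post) = 0)"

definition Sy :: "nat \<Rightarrow> ('g list \<Rightarrow> 'g) \<Rightarrow> bool" where
  "Sy k F \<longleftrightarrow> (\<forall>pre post x y. set pre \<subseteq> H \<longrightarrow> set post \<subseteq> H \<longrightarrow> x \<in> H \<longrightarrow> y \<in> H \<longrightarrow>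
      length pre + length post + 2 = k \<longrightarrow>
      F (pre @ x # y # post) = sg (par x) (par y) (F (pre @ y # x # post)))"

lemma ZrD: "Zr k F \<Longrightarrow> set pre \<subseteq> H \<Longrightarrow> set post \<subseteq> H \<Longrightarrow>
      length pre + length post + 1 = k \<Longrightarrow> F (pre @ 0 # post) = 0"
  unfolding Zr_def by blast

lemma SyD: "Sy k F \<Longrightarrow> set pre \<subseteq> H \<Longrightarrow> set post \<subseteq> H \<Longrightarrow> x \<in> H \<Longrightarrow> y \<in> H \<Longrightarrow>
      length pre + length post + 2 = k \<Longrightarrow>
      F (pre @ x # y # post) = sg (par x) (par y) (F (pre @ y # x # post))"
  unfolding Sy_def by blast

lemma Zr_deriv: "Zr k F \<Longrightarrow> x \<in> H \<Longrightarrow> Zr (k - 1) (\<lambda>zs. scale c (F (x # zs)))"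
  unfolding Zr_def
proof (intro allI impI)
  fix pre post :: "'g list"
  assume Z: "\<forall>pre post. set pre \<subseteq> H \<longrightarrow> set post \<subseteq> H \<longrightarrow> length pre + length post + 1 = k \<longrightarrow> F (pre @ 0 # post) = 0"
    and x: "x \<in> H" and h: "set pre \<subseteq> H" "set post \<subseteq> H" "length pre + length post + 1 = k - 1"
  have "F ((x # pre) @ 0 # post) = 0" using Z x h by (intro Z[rule_format]) auto
  then show "scale c (F (x # pre @ 0 # post)) = 0" by simp
qed

lemma Sy_deriv: "Sy k F \<Longrightarrow> x \<in> H \<Longrightarrow> Sy (k - 1) (\<lambda>zs. scale c (F (x # zs)))"
  unfolding Sy_def
proof (intro allI impI)
  fix pre post :: "'g list" and y z
  assume S: "\<forall>pre post x y. set pre \<subseteq> H \<longrightarrow> set post \<subseteq> H \<longrightarrow> x \<in> H \<longrightarrow> y \<in> H \<longrightarrow>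
      length pre + length post + 2 = k \<longrightarrow>
      F (pre @ x # y # post) = sg (par x) (par y) (F (pre @ y # x # post))"
    and x: "x \<in> H" and h: "set pre \<subseteq> H" "set post \<subseteq> H" "y \<in> H" "z \<in> H" "length pre + length post + 2 = k - 1"
  have "F ((x # pre) @ y # z # post) = sg (par y) (par z) (F ((x # pre) @ z # y # post))"
    using x h by (intro S[rule_format]) auto
  then show "scale c (F (x # pre @ y # z # post)) = sg (par y) (par z) (scale c (F (x # pre @ z # y # post)))"
    by (simp add: sg_scale)
qed

lemma finite_len: "finite {es :: bool list. length es = k}"
  using finite_lists_length_eq[of "UNIV :: bool set" k] by simp

lemma map2_par: "set w \<subseteq> H \<Longrightarrow> map2 PJ (map par w) w = w"
  by (induction w) (auto simp: proj_par)

lemma opar_h: assumes Z: "Zr k B" and w: "set w \<subseteq> H" "length w = k"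
  shows "OP c B w = PJ (c \<noteq> odd (length (filter id (map par w)))) (B w)"
proof -
  let ?S = "{es :: bool list. length es = length w}"
  let ?f = "\<lambda>es. PJ (c \<noteq> odd (length (filter id es))) (B (map2 PJ es w))"
  have in0: "map par w \<in> ?S" by simp
  have rest: "?f es = 0" if es: "es \<in> ?S - {map par w}" for es
  proof -
    have len: "length es = length w" using es by simp
    have "es \<noteq> map par w" using es by simp
    then have "\<not> (\<forall>i<length w. es ! i = map par w ! i)"
      using len nth_equalityI[of es "map par w"] by auto
    then obtain i where i0: "i < length w" "es ! i \<noteq> map par w ! i" by blast
    then have i: "i < length w" "es ! i \<noteq> par (w ! i)" by auto
    let ?L = "map2 PJ es w"
    have lenL: "length ?L = length w" using len by simp
    have Li: "?L ! i = 0"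
    proof -
      have "?L ! i = PJ (es ! i) (w ! i)" using i len by simp
      moreover have "w ! i \<in> set w" using i by simp
      then have "w ! i \<in> H" using w by blast
      moreover have "es ! i = (\<not> par (w ! i))" using i by simp
      ultimately show ?thesis using proj_npar by simp
    qed
    have iL: "i < length ?L" using i lenL by simp
    have Ldec: "?L = take i ?L @ ?L ! i # drop (Suc i) ?L"
      by (rule id_take_nth_drop[OF iL])
    have "B ?L = 0"
    proof -
      have "B (take i ?L @ 0 # drop (Suc i) ?L) = 0"
      proof (rule ZrD[OF Z])
        show "set (take i ?L) \<subseteq> H" by (rule subset_trans[OF set_take_subset set_map2_proj])
        show "set (drop (Suc i) ?L) \<subseteq> H" by (rule subset_trans[OF set_drop_subset set_map2_proj])
        show "length (take i ?L) + length (drop (Suc i) ?L) + 1 = k" using i lenL w by simp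
      qed
      moreover have "?L = take i ?L @ 0 # drop (Suc i) ?L" using Ldec unfolding Li .
      ultimately show ?thesis by (metis (no_types))
    qed
    then show ?thesis by simp
  qed
  have "OP c B w = sum ?f ?S" unfolding opar_def by simp
  also have "\<dots> = ?f (map par w) + sum ?f (?S - {map par w})"
    using finite_len in0 by (rule sum.remove)
  also have "sum ?f (?S - {map par w}) = 0" using rest by (intro sum.neutral) blast
  finally show ?thesis using map2_par[OF w(1)] by (simp add: o_def)
qed

lemma Zr_opar: assumes "Zr k B" shows "Zr k (OP c B)"
  unfolding Zr_def
proof (intro allI impI)
  fix pre post assume h: "set pre \<subseteq> H" "set post \<subseteq> H" "length pre + length post + 1 = k"
  have "OP c B (pre @ 0 # post) = PJ (c \<noteq> odd (length (filter id (map par (pre @ 0 # post))))) (B (pre @ 0 # post))"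
    by (rule opar_h[OF assms]) (use h subspace_0[OF sub0] in auto)
  also have "B (pre @ 0 # post) = 0" by (rule ZrD[OF assms h])
  finally show "OP c B (pre @ 0 # post) = 0" by simp
qed

lemma Sy_opar: assumes Z: "Zr k B" and S: "Sy k B" shows "Sy k (OP c B)"
  unfolding Sy_def
proof (intro allI impI)
  fix pre post x y assume h: "set pre \<subseteq> H" "set post \<subseteq> H" "x \<in> H" "y \<in> H" "length pre + length post + 2 = k"
  have 1: "OP c B (pre @ x # y # post) = PJ (c \<noteq> odd (length (filter id (map par (pre @ x # y # post))))) (B (pre @ x # y # post))"
    by (rule opar_h[OF Z]) (use h in auto)
  have 2: "OP c B (pre @ y # x # post) = PJ (c \<noteq> odd (length (filter id (map par (pre @ y # x # post))))) (B (pre @ y # x # post))"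
    by (rule opar_h[OF Z]) (use h in auto)
  have 3: "length (filter id (map par (pre @ y # x # post))) = length (filter id (map par (pre @ x # y # post)))"
    by simp
  show "OP c B (pre @ x # y # post) = sg (par x) (par y) (OP c B (pre @ y # x # post))"
    unfolding 1 2 3 using SyD[OF S h] by (simp add: proj_sg)
qed

lemma brk_Cons_h:
  assumes Z: "Zr p A" and x: "x \<in> H" and ys: "set ys \<subseteq> H" and len: "length ys + 1 = p + q"
  shows "BK p A q B (x # ys) = scale (inverse (of_nat (p + q)))
     ((if q = 0 then 0 else BK p A (q - 1) (\<lambda>zs. scale (of_nat q) (B (x # zs))) ys) +
      (if p = 0 then 0 else \<Sum>c\<in>UNIV. sg (par x) c (BK (p - 1) (\<lambda>zs. scale (of_nat p) (A (x # zs))) q (OP c B) ys)))"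
proof -
  have ne: "p + q \<noteq> 0" using len by auto
  have Z0: "BK (p - 1) (\<lambda>zs. scale (of_nat p) (A (PJ (\<not> par x) x # zs))) q (OP c B) ys = 0" if "p \<noteq> 0" for c
  proof -
    have "BK (p - 1) (\<lambda>zs. scale (of_nat p) (A (PJ (\<not> par x) x # zs))) q (OP c B) ys
        = BK (p - 1) (\<lambda>_. 0) q (OP c B) ys"
    proof (rule brk_cong[where S=H])
      show "scale (of_nat p) (A (PJ (\<not> par x) x # zs)) = 0" if "length zs = p - 1" "set zs \<subseteq> H" for zs
        using ZrD[OF Z, of "[]" zs] that \<open>p \<noteq> 0\<close> proj_npar[OF x] by simp
    qed (use len ys \<open>p \<noteq> 0\<close> in auto)
    then show ?thesis by (simp add: brk_zeroA)
  qed
  have P: "PJ (par x) x = x" using proj_par[OF x] .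
  have sums: "(\<Sum>e\<in>UNIV. \<Sum>c\<in>UNIV. sg e c (BK (p - 1) (\<lambda>zs. scale (of_nat p) (A (PJ e x # zs))) q (OP c B) ys))
      = (\<Sum>c\<in>UNIV. sg (par x) c (BK (p - 1) (\<lambda>zs. scale (of_nat p) (A (x # zs))) q (OP c B) ys))" if "p \<noteq> 0"
  proof (cases "par x")
    case True
    then show ?thesis using Z0[OF that] P by (simp add: UNIV_bool)
  next
    case False
    then show ?thesis using Z0[OF that] P by (simp add: UNIV_bool)
  qed
  show ?thesis using ne sums by (simp add: brk_Cons)
qed


definition "TT1 p q A B zs x y = (if 2 \<le> q then
   BK p A (q - 2) (\<lambda>w. scale (of_nat (q - 1)) (scale (of_nat q) (B (x # y # w)))) zs else 0)"
definition "TT2 p q A B zs x y = (if p \<noteq> 0 \<and> q \<noteq> 0 then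
   (\<Sum>d\<in>UNIV. sg (par y) d (BK (p - 1) (\<lambda>w. scale (of_nat p) (A (y # w))) (q - 1)
       (OP d (\<lambda>w. scale (of_nat q) (B (x # w)))) zs)) else 0)"
definition "TT3 p q A B zs x y = (if p \<noteq> 0 \<and> q \<noteq> 0 then
   (\<Sum>c\<in>UNIV. sg (par x) c (BK (p - 1) (\<lambda>w. scale (of_nat p) (A (x # w))) (q - 1)
       (\<lambda>w. scale (of_nat q) (OP c B (y # w))) zs)) else 0)"
definition "TT4 p q A B zs x y = (if 2 \<le> p then
   (\<Sum>c\<in>UNIV. sg (par x) c (\<Sum>d\<in>UNIV. sg (par y) d
      (BK (p - 2) (\<lambda>w. scale (of_nat (p - 1)) (scale (of_nat p) (A (x # y # w)))) q (OP d (OP c B)) zs))) else 0)"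

lemma brk_two:
  assumes ZA: "Zr p A" and x: "x \<in> H" and y: "y \<in> H" and zs: "set zs \<subseteq> H" and len: "length zs + 2 = p + q"
  shows "BK p A q B (x # y # zs) = scale (inverse (of_nat (p + q))) (scale (inverse (of_nat (p + q - 1)))
     (TT1 p q A B zs x y + TT2 p q A B zs x y + TT3 p q A B zs x y + TT4 p q A B zs x y))"
proof -
  have R1x: "BK p A q B (x # y # zs) = scale (inverse (of_nat (p + q)))
     ((if q = 0 then 0 else BK p A (q - 1) (\<lambda>zs. scale (of_nat q) (B (x # zs))) (y # zs)) +
      (if p = 0 then 0 else \<Sum>c\<in>UNIV. sg (par x) c (BK (p - 1) (\<lambda>zs. scale (of_nat p) (A (x # zs))) q (OP c B) (y # zs))))"
    by (rule brk_Cons_h[OF ZA x]) (use y zs len in auto)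
  have R1a: "BK p A (q - 1) (\<lambda>zs. scale (of_nat q) (B (x # zs))) (y # zs) = scale (inverse (of_nat (p + q - 1)))
     ((if q - 1 = 0 then 0 else BK p A (q - 2) (\<lambda>w. scale (of_nat (q - 1)) (scale (of_nat q) (B (x # y # w)))) zs) +
      (if p = 0 then 0 else \<Sum>d\<in>UNIV. sg (par y) d (BK (p - 1) (\<lambda>w. scale (of_nat p) (A (y # w))) (q - 1)
         (OP d (\<lambda>w. scale (of_nat q) (B (x # w)))) zs)))" if "q \<noteq> 0"
  proof -
    have e: "p + (q - 1) = p + q - 1" "q - 1 - 1 = q - 2" using that by auto
    show ?thesis using brk_Cons_h[OF ZA y zs, of "q - 1" "\<lambda>zs. scale (of_nat q) (B (x # zs))"] len that
      by (simp only: e)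
  qed
  have R1b: "BK (p - 1) (\<lambda>zs. scale (of_nat p) (A (x # zs))) q (OP c B) (y # zs) = scale (inverse (of_nat (p + q - 1)))
     ((if q = 0 then 0 else BK (p - 1) (\<lambda>w. scale (of_nat p) (A (x # w))) (q - 1) (\<lambda>w. scale (of_nat q) (OP c B (y # w))) zs) +
      (if p - 1 = 0 then 0 else \<Sum>d\<in>UNIV. sg (par y) d
         (BK (p - 2) (\<lambda>w. scale (of_nat (p - 1)) (scale (of_nat p) (A (x # y # w)))) q (OP d (OP c B)) zs)))" if "p \<noteq> 0" for c
  proof -
    have e: "p - 1 + q = p + q - 1" "p - 1 - 1 = p - 2" using that by auto
    show ?thesis using brk_Cons_h[OF Zr_deriv[OF ZA x, of "of_nat p"] y zs, of q "OP c B"] len that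
      by (simp only: e)
  qed
  show ?thesis
  proof (cases "q = 0")
    case True
    then have p: "p \<noteq> 0" "p \<noteq> 1" using len by auto
    show ?thesis using True p unfolding R1x R1b[OF p(1)] TT1_def TT2_def TT3_def TT4_def
      by (simp add: UNIV_bool sg_scale sg_add scale_right_distrib)
  next
    case False
    note q = this
    show ?thesis
    proof (cases "p = 0")
      case True
      then have "q \<noteq> 1" using len by auto
      then show ?thesis using True q unfolding R1x R1a[OF q] TT1_def TT2_def TT3_def TT4_def
        by (simp add: UNIV_bool sg_scale sg_add scale_right_distrib)
    next
      case False
      show ?thesis using False q unfolding R1x R1a[OF q] R1b[OF False] TT1_def TT2_def TT3_def TT4_def
        by (cases "q = 1"; cases "p = 1") (simp_all add: UNIV_bool sg_scale sg_add scale_right_distrib algebra_simps)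
    qed
  qed
qed


lemma TT1_swap:
  assumes SB: "Sy q B" and x: "x \<in> H" and y: "y \<in> H" and zs: "set zs \<subseteq> H" and len: "length zs + 2 = p + q"
  shows "TT1 p q A B zs x y = sg (par x) (par y) (TT1 p q A B zs y x)"
proof (cases "2 \<le> q")
  case True
  have "BK p A (q - 2) (\<lambda>w. scale (of_nat (q - 1)) (scale (of_nat q) (B (x # y # w)))) zs
      = BK p A (q - 2) (\<lambda>w. sg (par x) (par y) (scale (of_nat (q - 1)) (scale (of_nat q) (B (y # x # w))))) zs"
  proof (rule brk_cong[where S=H])
    show "scale (of_nat (q - 1)) (scale (of_nat q) (B (x # y # w))) =
          sg (par x) (par y) (scale (of_nat (q - 1)) (scale (of_nat q) (B (y # x # w))))"
      if "length w = q - 2" "set w \<subseteq> H" for w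
      using SyD[OF SB, of "[]" w x y] that x y True by (simp add: sg_scale)
  qed (use zs len True in auto)
  then show ?thesis using True by (simp add: TT1_def brk_sgB)
qed (simp add: TT1_def)

lemma opar_opar_h: assumes Z: "Zr k B" and w: "set w \<subseteq> H" "length w = k"
  shows "OP d (OP c B) w = (if d = c then OP c B w else 0)"
  using opar_h[OF Zr_opar[OF Z] w, of d c] opar_h[OF Z w, of c]
  by (auto simp: proj_proj)

lemma brk_opar_opar: assumes Z: "Zr q B" and zs: "set zs \<subseteq> H" and len: "length zs = P + q"
  shows "BK P A' q (OP d (OP c B)) zs = (if d = c then BK P A' q (OP c B) zs else 0)"
proof (cases "d = c")
  case True
  have "BK P A' q (OP d (OP c B)) zs = BK P A' q (OP c B) zs"
    by (rule brk_cong[where S=H]) (use zs len opar_opar_h[OF Z] True in auto)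
  then show ?thesis using True by simp
next
  case False
  have "BK P A' q (OP d (OP c B)) zs = BK P A' q (\<lambda>_. 0) zs"
    by (rule brk_cong[where S=H]) (use zs len opar_opar_h[OF Z] False in auto)
  then show ?thesis using False by (simp add: brk_zeroB)
qed

lemma TT4_swap:
  assumes SA: "Sy p A" and ZB: "Zr q B" and x: "x \<in> H" and y: "y \<in> H" and zs: "set zs \<subseteq> H" and len: "length zs + 2 = p + q"
  shows "TT4 p q A B zs x y = sg (par x) (par y) (TT4 p q A B zs y x)"
proof (cases "2 \<le> p")
  case True
  let ?Y = "\<lambda>c. BK (p - 2) (\<lambda>w. scale (of_nat (p - 1)) (scale (of_nat p) (A (y # x # w)))) q (OP c B) zs"
  have sw: "BK (p - 2) (\<lambda>w. scale (of_nat (p - 1)) (scale (of_nat p) (A (x # y # w)))) q X zs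
     = sg (par x) (par y) (BK (p - 2) (\<lambda>w. scale (of_nat (p - 1)) (scale (of_nat p) (A (y # x # w)))) q X zs)" for X
  proof -
    have "BK (p - 2) (\<lambda>w. scale (of_nat (p - 1)) (scale (of_nat p) (A (x # y # w)))) q X zs
      = BK (p - 2) (\<lambda>w. sg (par x) (par y) (scale (of_nat (p - 1)) (scale (of_nat p) (A (y # x # w))))) q X zs"
    proof (rule brk_cong[where S=H])
      show "scale (of_nat (p - 1)) (scale (of_nat p) (A (x # y # w))) =
          sg (par x) (par y) (scale (of_nat (p - 1)) (scale (of_nat p) (A (y # x # w))))"
        if "length w = p - 2" "set w \<subseteq> H" for w
        using SyD[OF SA, of "[]" w x y] that x y True by (simp add: sg_scale)
    qed (use zs len True in auto)
    then show ?thesis by (simp add: brk_sgA)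
  qed
  have E1: "BK (p - 2) (\<lambda>w. scale (of_nat (p - 1)) (scale (of_nat p) (A (x # y # w)))) q (OP d (OP c B)) zs
     = (if d = c then sg (par x) (par y) (?Y c) else 0)" for c d
    using brk_opar_opar[OF ZB zs, of "p - 2"] len True sw by simp
  have E2: "BK (p - 2) (\<lambda>w. scale (of_nat (p - 1)) (scale (of_nat p) (A (y # x # w)))) q (OP d (OP c B)) zs
     = (if d = c then ?Y c else 0)" for c d
    using brk_opar_opar[OF ZB zs, of "p - 2"] len True by simp
  show ?thesis using True unfolding TT4_def
    by (simp only: E1 E2 if_True) (cases "par x"; cases "par y"; simp add: UNIV_bool sg_def)
qed (simp add: TT4_def)

lemma TT23_swap:
  assumes ZB: "Zr q B" and x: "x \<in> H" and y: "y \<in> H" and zs: "set zs \<subseteq> H" and len: "length zs + 2 = p + q"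
  shows "TT2 p q A B zs x y = sg (par x) (par y) (TT3 p q A B zs y x)"
proof (cases "p \<noteq> 0 \<and> q \<noteq> 0")
  case True
  let ?Y = "\<lambda>c. BK (p - 1) (\<lambda>w. scale (of_nat p) (A (y # w))) (q - 1) (\<lambda>w. scale (of_nat q) (OP c B (x # w))) zs"
  have E: "BK (p - 1) (\<lambda>w. scale (of_nat p) (A (y # w))) (q - 1) (OP d (\<lambda>w. scale (of_nat q) (B (x # w)))) zs
     = ?Y (d \<noteq> par x)" for d
  proof (rule brk_cong[where S=H])
    show "OP d (\<lambda>w. scale (of_nat q) (B (x # w))) w = scale (of_nat q) (OP (d \<noteq> par x) B (x # w))"
      if w: "length w = q - 1" "set w \<subseteq> H" for w
    proof -
      have 1: "OP d (\<lambda>w. scale (of_nat q) (B (x # w))) w =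
          PJ (d \<noteq> odd (length (filter id (map par w)))) (scale (of_nat q) (B (x # w)))"
        by (rule opar_h[OF Zr_deriv[OF ZB x]]) (use w in auto)
      have 2: "OP (d \<noteq> par x) B (x # w) =
          PJ ((d \<noteq> par x) \<noteq> odd (length (filter id (map par (x # w))))) (B (x # w))"
        by (rule opar_h[OF ZB]) (use w x True in auto)
      show ?thesis unfolding 1 2 by (cases "par x") (simp_all add: proj_scale)
    qed
  qed (use zs len True in auto)
  show ?thesis using True unfolding TT2_def TT3_def
    by (simp only: E if_True) (cases "par x"; cases "par y"; simp add: UNIV_bool sg_def)
qed (auto simp add: TT2_def TT3_def)


lemma brk_sym:
  assumes "Zr p A" "Sy p A" "Zr q B" "Sy q B" "set pre \<subseteq> H" "set post \<subseteq> H" "x \<in> H" "y \<in> H"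
    "length pre + length post + 2 = p + q"
  shows "BK p A q B (pre @ x # y # post) = sg (par x) (par y) (BK p A q B (pre @ y # x # post))"
  using assms
proof (induction pre arbitrary: p q A B)
  case Nil
  note h = Nil.prems
  have L: "length post + 2 = p + q" using h by simp
  have e1: "BK p A q B (x # y # post) = scale (inverse (of_nat (p + q))) (scale (inverse (of_nat (p + q - 1)))
     (TT1 p q A B post x y + TT2 p q A B post x y + TT3 p q A B post x y + TT4 p q A B post x y))"
    by (rule brk_two) (use h L in auto)
  have e2: "BK p A q B (y # x # post) = scale (inverse (of_nat (p + q))) (scale (inverse (of_nat (p + q - 1)))
     (TT1 p q A B post y x + TT2 p q A B post y x + TT3 p q A B post y x + TT4 p q A B post y x))"
    by (rule brk_two) (use h L in auto)
  have t1: "TT1 p q A B post x y = sg (par x) (par y) (TT1 p q A B post y x)"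
    by (rule TT1_swap) (use h L in auto)
  have t4: "TT4 p q A B post x y = sg (par x) (par y) (TT4 p q A B post y x)"
    by (rule TT4_swap) (use h L in auto)
  have t2: "TT2 p q A B post x y = sg (par x) (par y) (TT3 p q A B post y x)"
    by (rule TT23_swap) (use h L in auto)
  have t3': "TT2 p q A B post y x = sg (par y) (par x) (TT3 p q A B post x y)"
    by (rule TT23_swap) (use h L in auto)
  have t3: "TT3 p q A B post x y = sg (par x) (par y) (TT2 p q A B post y x)"
    using t3' sg_inv sg_sym by metis
  show ?case unfolding append_Nil e1 e2 t1 t2 t3 t4
    by (simp add: sg_add sg_scale algebra_simps)
next
  case (Cons w pre)
  note h = Cons.prems
  have wH: "w \<in> H" and preH: "set pre \<subseteq> H" using h by auto
  let ?ys1 = "pre @ x # y # post" and ?ys2 = "pre @ y # x # post"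
  have ys1: "set ?ys1 \<subseteq> H" and ys2: "set ?ys2 \<subseteq> H" using h by auto
  have len1: "length ?ys1 + 1 = p + q" and len2: "length ?ys2 + 1 = p + q" using h by auto
  have F: "BK p A (q - 1) (\<lambda>zs. scale (of_nat q) (B (w # zs))) ?ys1
     = sg (par x) (par y) (BK p A (q - 1) (\<lambda>zs. scale (of_nat q) (B (w # zs))) ?ys2)" if "q \<noteq> 0"
    by (rule Cons.IH) (use h that wH Zr_deriv[OF h(3) wH] Sy_deriv[OF h(4) wH] in auto)
  have G: "BK (p - 1) (\<lambda>zs. scale (of_nat p) (A (w # zs))) q (OP c B) ?ys1
     = sg (par x) (par y) (BK (p - 1) (\<lambda>zs. scale (of_nat p) (A (w # zs))) q (OP c B) ?ys2)" if "p \<noteq> 0" for c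
    by (rule Cons.IH) (use h that wH Zr_deriv[OF h(1) wH] Sy_deriv[OF h(2) wH] Zr_opar[OF h(3)] Sy_opar[OF h(3) h(4)] in auto)
  have E1: "BK p A q B (w # ?ys1) = scale (inverse (of_nat (p + q)))
     ((if q = 0 then 0 else BK p A (q - 1) (\<lambda>zs. scale (of_nat q) (B (w # zs))) ?ys1) +
      (if p = 0 then 0 else \<Sum>c\<in>UNIV. sg (par w) c (BK (p - 1) (\<lambda>zs. scale (of_nat p) (A (w # zs))) q (OP c B) ?ys1)))"
    by (rule brk_Cons_h[OF h(1) wH ys1 len1])
  have E2: "BK p A q B (w # ?ys2) = scale (inverse (of_nat (p + q)))
     ((if q = 0 then 0 else BK p A (q - 1) (\<lambda>zs. scale (of_nat q) (B (w # zs))) ?ys2) +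
      (if p = 0 then 0 else \<Sum>c\<in>UNIV. sg (par w) c (BK (p - 1) (\<lambda>zs. scale (of_nat p) (A (w # zs))) q (OP c B) ?ys2)))"
    by (rule brk_Cons_h[OF h(1) wH ys2 len2])
  show ?case unfolding append_Cons E1 E2
    using F G by (cases "q = 0"; cases "p = 0") (simp_all add: sg_add sg_scale sg_sum sg_comm[of "par x" "par y"])
qed


lemma mlD1: "multilin scale k F \<Longrightarrow> length pre + length post + 1 = k \<Longrightarrow>
   F (pre @ (x + y) # post) = F (pre @ x # post) + F (pre @ y # post)"
  unfolding multilin_def by blast
lemma mlD2: "multilin scale k F \<Longrightarrow> length pre + length post + 1 = k \<Longrightarrow>
   F (pre @ scale c x # post) = scale c (F (pre @ x # post))"
  unfolding multilin_def by blast
lemma mlI: "(\<And>pre post x y. length pre + length post + 1 = k \<Longrightarrow>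
     F (pre @ (x + y) # post) = F (pre @ x # post) + F (pre @ y # post)) \<Longrightarrow>
   (\<And>pre post c x. length pre + length post + 1 = k \<Longrightarrow>
     F (pre @ scale c x # post) = scale c (F (pre @ x # post))) \<Longrightarrow> multilin scale k F"
  unfolding multilin_def by blast

lemma ml_deriv: assumes "multilin scale k F" shows "multilin scale (k - 1) (\<lambda>zs. scale c (F (w # zs)))"
proof (rule mlI)
  fix pre post :: "'g list" and x y assume "length pre + length post + 1 = k - 1"
  then have l: "length (w # pre) + length post + 1 = k" by simp
  show "scale c (F (w # pre @ (x + y) # post)) = scale c (F (w # pre @ x # post)) + scale c (F (w # pre @ y # post))"
    using mlD1[OF assms l, of x y] by (simp add: scale_right_distrib)
next
  fix pre post :: "'g list" and d x assume "length pre + length post + 1 = k - 1"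
  then have l: "length (w # pre) + length post + 1 = k" by simp
  show "scale c (F (w # pre @ scale d x # post)) = scale d (scale c (F (w # pre @ x # post)))"
    using mlD2[OF assms l, of d x] by (simp add: scale_left_commute)
qed

lemma map2_split: "length es = length pre + 1 + length post \<Longrightarrow>
  map2 PJ es (pre @ z # post) = map2 PJ (take (length pre) es) pre @ PJ (es ! length pre) z # map2 PJ (drop (Suc (length pre)) es) post"
proof (induction pre arbitrary: es)
  case Nil
  then show ?case by (cases es) auto
next
  case (Cons a pre)
  then show ?case by (cases es) auto
qed

lemma ml_opar: assumes MB: "multilin scale k B" shows "multilin scale k (OP c B)"
proof (rule mlI)
  fix pre post :: "'g list" and x y assume l: "length pre + length post + 1 = k"
  have eq: "PJ (c \<noteq> odd (length (filter id es))) (B (map2 PJ es (pre @ (x + y) # post))) =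
        PJ (c \<noteq> odd (length (filter id es))) (B (map2 PJ es (pre @ x # post))) +
        PJ (c \<noteq> odd (length (filter id es))) (B (map2 PJ es (pre @ y # post)))"
    if "es \<in> {es. length es = length (pre @ (x + y) # post)}" for es
  proof -
    have le: "length es = length pre + 1 + length post" using that by simp
    have l2: "length (map2 PJ (take (length pre) es) pre) + length (map2 PJ (drop (Suc (length pre)) es) post) + 1 = k"
      using le l by simp
    show ?thesis unfolding map2_split[OF le] proj_add mlD1[OF MB l2] by (simp add: proj_add)
  qed
  show "OP c B (pre @ (x + y) # post) = OP c B (pre @ x # post) + OP c B (pre @ y # post)"
    unfolding opar_def length_append length_Cons sum.distrib[symmetric]
    apply (rule sum.cong)
     apply simp
    apply (rule eq)
    apply simp
    done
next
  fix pre post :: "'g list" and d x assume l: "length pre + length post + 1 = k"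
  have eq: "PJ (c \<noteq> odd (length (filter id es))) (B (map2 PJ es (pre @ scale d x # post))) =
        scale d (PJ (c \<noteq> odd (length (filter id es))) (B (map2 PJ es (pre @ x # post))))"
    if "es \<in> {es. length es = length (pre @ scale d x # post)}" for es
  proof -
    have le: "length es = length pre + 1 + length post" using that by simp
    have l2: "length (map2 PJ (take (length pre) es) pre) + length (map2 PJ (drop (Suc (length pre)) es) post) + 1 = k"
      using le l by simp
    show ?thesis unfolding map2_split[OF le] proj_scale mlD2[OF MB l2] by (simp add: proj_scale)
  qed
  show "OP c B (pre @ scale d x # post) = scale d (OP c B (pre @ x # post))"
    unfolding opar_def length_append length_Cons scale_sum_right
    apply (rule sum.cong)
     apply simp
    apply (rule eq)
    apply simp
    done
qed


lemma brk_ml_aux: "n = p + q \<Longrightarrow> multilin scale p A \<Longrightarrow> multilin scale q B \<Longrightarrow> multilin scale n (BK p A q B)"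
proof (induction n arbitrary: p q A B)
  case 0
  show ?case by (rule mlI) simp_all
next
  case (Suc n)
  note MA = Suc.prems(2) and MB = Suc.prems(3)
  have ne: "p + q \<noteq> 0" using Suc.prems(1) by linarith
  have IF: "multilin scale n (BK p A (q - 1) (\<lambda>zs. scale (of_nat q) (B (w # zs))))" if "q \<noteq> 0" for w
    by (rule Suc.IH) (use Suc.prems(1) that MA ml_deriv[OF MB] in auto)
  have IG: "multilin scale n (BK (p - 1) (\<lambda>zs. scale (of_nat p) (A (PJ e w # zs))) q (OP c B))" if "p \<noteq> 0" for w e c
    by (rule Suc.IH) (use Suc.prems(1) that ml_deriv[OF MA] ml_opar[OF MB] in auto)
  show ?case
  proof (rule mlI)
    fix pre post :: "'g list" and x y
    assume len: "length pre + length post + 1 = Suc n"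
    show "BK p A q B (pre @ (x + y) # post) = BK p A q B (pre @ x # post) + BK p A q B (pre @ y # post)"
    proof (cases pre)
      case Nil
      have lp: "length post = p + q - 1" using len Nil Suc.prems(1) by simp
      have Fa: "BK p A (q - 1) (\<lambda>zs. scale (of_nat q) (B ((x + y) # zs))) post =
          BK p A (q - 1) (\<lambda>zs. scale (of_nat q) (B (x # zs))) post + BK p A (q - 1) (\<lambda>zs. scale (of_nat q) (B (y # zs))) post"
        if "q \<noteq> 0"
      proof -
        have "BK p A (q - 1) (\<lambda>zs. scale (of_nat q) (B ((x + y) # zs))) post =
              BK p A (q - 1) (\<lambda>zs. scale (of_nat q) (B (x # zs)) + scale (of_nat q) (B (y # zs))) post"
        proof (rule brk_cong[where S=UNIV])
          show "scale (of_nat q) (B ((x + y) # zs)) = scale (of_nat q) (B (x # zs)) + scale (of_nat q) (B (y # zs))"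
            if "length zs = q - 1" for zs
            using mlD1[OF MB, of "[]" zs x y] that \<open>q \<noteq> 0\<close> by (simp add: scale_right_distrib)
        qed (use lp that in auto)
        then show ?thesis by (simp add: brk_addB)
      qed
      have Ga: "BK (p - 1) (\<lambda>zs. scale (of_nat p) (A (PJ e (x + y) # zs))) q (OP c B) post =
          BK (p - 1) (\<lambda>zs. scale (of_nat p) (A (PJ e x # zs))) q (OP c B) post +
          BK (p - 1) (\<lambda>zs. scale (of_nat p) (A (PJ e y # zs))) q (OP c B) post"
        if "p \<noteq> 0" for e c
      proof -
        have "BK (p - 1) (\<lambda>zs. scale (of_nat p) (A (PJ e (x + y) # zs))) q (OP c B) post =
              BK (p - 1) (\<lambda>zs. scale (of_nat p) (A (PJ e x # zs)) + scale (of_nat p) (A (PJ e y # zs))) q (OP c B) post"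
        proof (rule brk_cong[where S=UNIV])
          show "scale (of_nat p) (A (PJ e (x + y) # zs)) = scale (of_nat p) (A (PJ e x # zs)) + scale (of_nat p) (A (PJ e y # zs))"
            if "length zs = p - 1" for zs
            using mlD1[OF MA, of "[]" zs "PJ e x" "PJ e y"] that \<open>p \<noteq> 0\<close> by (simp add: scale_right_distrib proj_add)
        qed (use lp that in auto)
        then show ?thesis by (simp add: brk_addA)
      qed
      show ?thesis unfolding Nil append_Nil brk_Cons[OF ne]
        using Fa Ga by (cases "q = 0"; cases "p = 0") (simp_all add: sg_add sum.distrib scale_right_distrib algebra_simps)
    next
      case (Cons w pre')
      have l: "length pre' + length post + 1 = n" using len Cons by simp
      show ?thesis unfolding Cons append_Cons brk_Cons[OF ne]
        using mlD1[OF IF l] mlD1[OF IG l] by (cases "q = 0"; cases "p = 0") (simp_all add: sg_add sum.distrib scale_right_distrib algebra_simps)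
    qed
  next
    fix pre post :: "'g list" and d x
    assume len: "length pre + length post + 1 = Suc n"
    show "BK p A q B (pre @ scale d x # post) = scale d (BK p A q B (pre @ x # post))"
    proof (cases pre)
      case Nil
      have lp: "length post = p + q - 1" using len Nil Suc.prems(1) by simp
      have Fa: "BK p A (q - 1) (\<lambda>zs. scale (of_nat q) (B (scale d x # zs))) post =
          scale d (BK p A (q - 1) (\<lambda>zs. scale (of_nat q) (B (x # zs))) post)"
        if "q \<noteq> 0"
      proof -
        have "BK p A (q - 1) (\<lambda>zs. scale (of_nat q) (B (scale d x # zs))) post =
              BK p A (q - 1) (\<lambda>zs. scale d (scale (of_nat q) (B (x # zs)))) post"
        proof (rule brk_cong[where S=UNIV])
          show "scale (of_nat q) (B (scale d x # zs)) = scale d (scale (of_nat q) (B (x # zs)))"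
            if "length zs = q - 1" for zs
            using mlD2[OF MB, of "[]" zs d x] that \<open>q \<noteq> 0\<close> by (simp add: scale_left_commute)
        qed (use lp that in auto)
        then show ?thesis by (simp add: brk_scaleB)
      qed
      have Ga: "BK (p - 1) (\<lambda>zs. scale (of_nat p) (A (PJ e (scale d x) # zs))) q (OP c B) post =
          scale d (BK (p - 1) (\<lambda>zs. scale (of_nat p) (A (PJ e x # zs))) q (OP c B) post)"
        if "p \<noteq> 0" for e c
      proof -
        have "BK (p - 1) (\<lambda>zs. scale (of_nat p) (A (PJ e (scale d x) # zs))) q (OP c B) post =
              BK (p - 1) (\<lambda>zs. scale d (scale (of_nat p) (A (PJ e x # zs)))) q (OP c B) post"
        proof (rule brk_cong[where S=UNIV])
          show "scale (of_nat p) (A (PJ e (scale d x) # zs)) = scale d (scale (of_nat p) (A (PJ e x # zs)))"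
            if "length zs = p - 1" for zs
            using mlD2[OF MA, of "[]" zs d "PJ e x"] that \<open>p \<noteq> 0\<close> by (simp add: scale_left_commute proj_scale)
        qed (use lp that in auto)
        then show ?thesis by (simp add: brk_scaleA)
      qed
      show ?thesis unfolding Nil append_Nil brk_Cons[OF ne]
        using Fa Ga by (cases "q = 0"; cases "p = 0") (simp_all add: sg_scale scale_sum_right scale_right_distrib algebra_simps)
    next
      case (Cons w pre')
      have l: "length pre' + length post + 1 = n" using len Cons by simp
      show ?thesis unfolding Cons append_Cons brk_Cons[OF ne]
        using mlD2[OF IF l] mlD2[OF IG l] by (cases "q = 0"; cases "p = 0") (simp_all add: sg_scale scale_sum_right scale_right_distrib algebra_simps)
    qed
  qed
qed

lemma brk_ml: "multilin scale p A \<Longrightarrow> multilin scale q B \<Longrightarrow> multilin scale (p + q) (BK p A q B)"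
  using brk_ml_aux by blast


lemma ml_sum: "finite S \<Longrightarrow> (\<And>i. i \<in> S \<Longrightarrow> multilin scale k (F i)) \<Longrightarrow> multilin scale k (\<lambda>xs. \<Sum>i\<in>S. F i xs)"
proof (rule mlI)
  fix pre post :: "'g list" and x y
  assume f: "finite S" and m: "\<And>i. i \<in> S \<Longrightarrow> multilin scale k (F i)" and l: "length pre + length post + 1 = k"
  have "(\<Sum>i\<in>S. F i (pre @ (x + y) # post)) = (\<Sum>i\<in>S. F i (pre @ x # post) + F i (pre @ y # post))"
    by (rule sum.cong[OF refl]) (rule mlD1[OF m l])
  then show "(\<Sum>i\<in>S. F i (pre @ (x + y) # post)) = (\<Sum>i\<in>S. F i (pre @ x # post)) + (\<Sum>i\<in>S. F i (pre @ y # post))"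
    by (simp add: sum.distrib)
next
  fix pre post :: "'g list" and c x
  assume f: "finite S" and m: "\<And>i. i \<in> S \<Longrightarrow> multilin scale k (F i)" and l: "length pre + length post + 1 = k"
  have "(\<Sum>i\<in>S. F i (pre @ scale c x # post)) = (\<Sum>i\<in>S. scale c (F i (pre @ x # post)))"
    by (rule sum.cong[OF refl]) (rule mlD2[OF m l])
  then show "(\<Sum>i\<in>S. F i (pre @ scale c x # post)) = scale c (\<Sum>i\<in>S. F i (pre @ x # post))"
    by (simp add: scale_sum_right)
qed

lemma ml_zero: "multilin scale k F \<Longrightarrow> length pre + length post + 1 = k \<Longrightarrow> F (pre @ 0 # post) = 0"
  using mlD2[of k F pre post 0 0] by simp

lemma Zr_ml: "multilin scale k F \<Longrightarrow> Zr k F"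
  unfolding Zr_def using ml_zero by blast

lemma Sy_symop: "symmetric_op G0 G1 k F \<Longrightarrow> Sy k F"
  unfolding Sy_def symmetric_op_def homog_def
proof (intro allI impI)
  fix pre post x y
  assume S: "2 \<le> k \<longrightarrow> (\<forall>pre post a b x y. length pre + length post + 2 = k \<longrightarrow>
         (\<forall>z\<in>set pre \<union> set post. z \<in> G0 \<union> G1) \<longrightarrow> x \<in> Gp G0 G1 a \<longrightarrow> y \<in> Gp G0 G1 b \<longrightarrow>
         F (pre @ x # y # post) = sg a b (F (pre @ y # x # post)))"
    and h: "set pre \<subseteq> H" "set post \<subseteq> H" "x \<in> H" "y \<in> H" "length pre + length post + 2 = k"
  show "F (pre @ x # y # post) = sg (par x) (par y) (F (pre @ y # x # post))"
  proof -
    have k2: "2 \<le> k" using h(5) by simp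
    have hp: "\<And>z. z \<in> set pre \<union> set post \<Longrightarrow> z \<in> G0 \<union> G1" using h(1,2) by auto
    show ?thesis using S[rule_format, OF k2 h(5) hp par_Gp[OF h(3)] par_Gp[OF h(4)]] .
  qed
qed

lemma par_eq: assumes "x \<in> Gp G0 G1 a" "x \<noteq> 0" shows "par x = a"
proof (cases a)
  case True
  then have "x \<in> G1" using assms(1) by (simp add: Gp_def)
  then have "x \<notin> G0" using inter assms(2) by blast
  then show ?thesis by (simp add: par_def True)
next
  case False
  then have "x \<in> G0" using assms(1) by (simp add: Gp_def)
  then show ?thesis by (simp add: par_def False)
qed

lemma symop_of: assumes M: "multilin scale k F" and S: "Sy k F" shows "symmetric_op G0 G1 k F"
  unfolding symmetric_op_def homog_def
proof (intro impI allI)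
  fix pre post :: "'g list" and a b x y
  assume l: "length pre + length post + 2 = k" and hp: "\<forall>z\<in>set pre \<union> set post. z \<in> G0 \<union> G1"
    and x: "x \<in> Gp G0 G1 a" and y: "y \<in> Gp G0 G1 b"
  show "F (pre @ x # y # post) = sg a b (F (pre @ y # x # post))"
  proof (cases "x = 0 \<or> y = 0")
    case True
    have z1: "F (pre @ x # y # post) = 0"
    proof (cases "x = 0")
      case True then show ?thesis using ml_zero[OF M, of pre "y # post"] l by simp
    next
      case False then have "y = 0" using \<open>x = 0 \<or> y = 0\<close> by simp
      then show ?thesis using ml_zero[OF M, of "pre @ [x]" post] l by simp
    qed
    have z2: "F (pre @ y # x # post) = 0"
    proof (cases "y = 0")
      case True then show ?thesis using ml_zero[OF M, of pre "x # post"] l by simp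
    next
      case False then have "x = 0" using \<open>x = 0 \<or> y = 0\<close> by simp
      then show ?thesis using ml_zero[OF M, of "pre @ [y]" post] l by simp
    qed
    show ?thesis using z1 z2 by simp
  next
    case False
    then have "par x = a" "par y = b" using par_eq x y by auto
    moreover have xH: "x \<in> H" using x by (cases a) (auto simp: Gp_def)
    moreover have yH: "y \<in> H" using y by (cases b) (auto simp: Gp_def)
    moreover have "set pre \<subseteq> H" "set post \<subseteq> H" using hp by auto
    ultimately show ?thesis using SyD[OF S _ _ xH yH l] by simp
  qed
qed

lemma Sy_sum: assumes Y: "\<And>i. i \<in> S \<Longrightarrow> Sy k (F i)" shows "Sy k (\<lambda>xs. \<Sum>i\<in>S. F i xs)"
  unfolding Sy_def
proof (intro allI impI)
  fix pre post x y assume h: "set pre \<subseteq> H" "set post \<subseteq> H" "x \<in> H" "y \<in> H" "length pre + length post + 2 = k"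
  have "(\<Sum>i\<in>S. F i (pre @ x # y # post)) = (\<Sum>i\<in>S. sg (par x) (par y) (F i (pre @ y # x # post)))"
    by (rule sum.cong[OF refl]) (rule SyD[OF Y h])
  then show "(\<Sum>i\<in>S. F i (pre @ x # y # post)) = sg (par x) (par y) (\<Sum>i\<in>S. F i (pre @ y # x # post))"
    by (simp add: sg_sum)
qed

lemma brk_vanA: assumes "\<And>zs. length zs = p \<Longrightarrow> A zs = 0" "length xs = p + q" shows "BK p A q B xs = 0"
proof -
  have "BK p A q B xs = BK p (\<lambda>_. 0) q B xs" by (rule brk_cong[where S=UNIV]) (use assms in auto)
  then show ?thesis by (simp add: brk_zeroA)
qed
lemma brk_vanB: assumes "\<And>zs. length zs = q \<Longrightarrow> B zs = 0" "length xs = p + q" shows "BK p A q B xs = 0"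
proof -
  have "BK p A q B xs = BK p A q (\<lambda>_. 0) xs" by (rule brk_cong[where S=UNIV]) (use assms in auto)
  then show ?thesis by (simp add: brk_zeroB)
qed

lemma ext_in_S:
  assumes SA: "in_S scale G0 G1 A" and SB: "in_S scale G0 G1 B"
  shows "in_S scale G0 G1 (ext_br scale G0 G1 br A B)"
proof -
  have MA: "\<And>p. multilin scale p (A p)" and MB: "\<And>p. multilin scale p (B p)"
    and FA: "finite {p. \<exists>xs. length xs = p \<and> A p xs \<noteq> 0}" and FB: "finite {p. \<exists>xs. length xs = p \<and> B p xs \<noteq> 0}"
    and YA: "\<And>p. symmetric_op G0 G1 p (A p)" and YB: "\<And>p. symmetric_op G0 G1 p (B p)"
    using SA SB by (auto simp: in_S_def in_U_def)
  have Mt: "multilin scale n (BK p (A p) (n - p) (B (n - p)))" if "p \<in> {..n}" for n p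
    using brk_ml[OF MA MB, of p "n - p"] that by simp
  have M: "multilin scale n (ext_br scale G0 G1 br A B n)" for n
    unfolding ext_br_def by (rule ml_sum) (use Mt in auto)
  have St: "Sy n (BK p (A p) (n - p) (B (n - p)))" if "p \<in> {..n}" for n p
    unfolding Sy_def
  proof (intro allI impI)
    fix pre post x y assume h: "set pre \<subseteq> H" "set post \<subseteq> H" "x \<in> H" "y \<in> H" "length pre + length post + 2 = n"
    show "BK p (A p) (n - p) (B (n - p)) (pre @ x # y # post) = sg (par x) (par y) (BK p (A p) (n - p) (B (n - p)) (pre @ y # x # post))"
      by (rule brk_sym[OF Zr_ml[OF MA] Sy_symop[OF YA] Zr_ml[OF MB] Sy_symop[OF YB] h(1-4)]) (use h(5) that in simp)
  qed
  have Y: "symmetric_op G0 G1 n (ext_br scale G0 G1 br A B n)" for n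
  proof (rule symop_of[OF M])
    show "Sy n (ext_br scale G0 G1 br A B n)" unfolding ext_br_def by (rule Sy_sum) (use St in auto)
  qed
  from FA obtain MAx where MAx0: "\<forall>p \<in> {p. \<exists>xs. length xs = p \<and> A p xs \<noteq> 0}. p \<le> MAx"
    unfolding finite_nat_set_iff_bounded_le by blast
  then have MAx: "\<And>p. p \<in> {p. \<exists>xs. length xs = p \<and> A p xs \<noteq> 0} \<Longrightarrow> p \<le> MAx" by blast
  from FB obtain MBx where MBx0: "\<forall>p \<in> {p. \<exists>xs. length xs = p \<and> B p xs \<noteq> 0}. p \<le> MBx"
    unfolding finite_nat_set_iff_bounded_le by blast
  then have MBx: "\<And>p. p \<in> {p. \<exists>xs. length xs = p \<and> B p xs \<noteq> 0} \<Longrightarrow> p \<le> MBx" by blast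
  have F: "finite {n. \<exists>xs. length xs = n \<and> ext_br scale G0 G1 br A B n xs \<noteq> 0}"
  proof (rule finite_subset[of _ "{..MAx + MBx}"])
    show "{n. \<exists>xs. length xs = n \<and> ext_br scale G0 G1 br A B n xs \<noteq> 0} \<subseteq> {..MAx + MBx}"
    proof
      fix n assume "n \<in> {n. \<exists>xs. length xs = n \<and> ext_br scale G0 G1 br A B n xs \<noteq> 0}"
      then obtain xs where xs: "length xs = n" "ext_br scale G0 G1 br A B n xs \<noteq> 0" by blast
      show "n \<in> {..MAx + MBx}"
      proof (rule ccontr)
        assume "n \<notin> {..MAx + MBx}"
        then have big: "n > MAx + MBx" by simp
        have "BK p (A p) (n - p) (B (n - p)) xs = 0" if pn: "p \<in> {..n}" for p
        proof (cases "p \<le> MAx")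
          case True
          then have "n - p > MBx" using big by simp
          then have "B (n - p) zs = 0" if "length zs = n - p" for zs
          proof (rule contrapos_pp)
            assume "B (n - p) zs \<noteq> 0"
            then have "n - p \<in> {p. \<exists>xs. length xs = p \<and> B p xs \<noteq> 0}" using that by blast
            then show "\<not> MBx < n - p" using MBx by (simp add: not_less)
          qed
          moreover have "length xs = p + (n - p)" using xs(1) pn by simp
          ultimately show ?thesis by (rule brk_vanB)
        next
          case False
          then have "A p zs = 0" if "length zs = p" for zs
          proof (rule contrapos_pp)
            assume "A p zs \<noteq> 0"
            then have "p \<in> {p. \<exists>xs. length xs = p \<and> A p xs \<noteq> 0}" using that by blast
            then show "\<not> \<not> p \<le> MAx" using MAx by simp
          qed
          moreover have "length xs = p + (n - p)" using xs(1) pn by simp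
          ultimately show ?thesis by (rule brk_vanA)
        qed
        then have "ext_br scale G0 G1 br A B n xs = 0" unfolding ext_br_def by simp
        then show False using xs by simp
      qed
    qed
  qed simp
  show ?thesis unfolding in_S_def in_U_def using M Y F by blast
qed

end

theorem proposition4p2:
  fixes scale :: "'k::field_char_0 \<Rightarrow> 'g::ab_group_add \<Rightarrow> 'g"
    and G0 G1 :: "'g set" and br :: "'g \<Rightarrow> 'g \<Rightarrow> 'g"
    and A B :: "nat \<Rightarrow> 'g list \<Rightarrow> 'g"
  assumes "lie_superalgebra scale G0 G1 br"
    and "in_S scale G0 G1 A" and "in_S scale G0 G1 B"
  shows "in_S scale G0 G1 (ext_br scale G0 G1 br A B)"
  by (rule LSA.ext_in_S[OF LSA.intro[OF assms(1)] assms(2,3)])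

end
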